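(* Let $G$ be a graph, let $s\in\mathbb{N}_{\geq 1}\cup\{\infty\}$ and let $k\in\mathbb{N}$. The following three statements are equivalent. (1) $\mathbf{cc}_s(G)\leq k$, i.e., there is a cop strategy $f$ on $G$ of cost at most $k$ such that for every robber strategy $R$ on $G$ the pair $(f,R)$ is cop-winning. (2) $G$ has no nonempty $(k+1,s)$-edge-hide-out. (3) $\delta^{s}_{\rm e}(G)\leq k$.
   Context: All graphs are finite, undirected, loopless, and may have parallel edges; $E(G)$ is the multiset of edges. For $s\in\mathbb{N}_{\geq1}\cup\{\infty\}$, an $s$-path is a path with at most $s$ edges (any path if $s=\infty$); a path of length $0$ from a vertex to itself is allowed. For $x\in V(G)$ and $S\subseteq V(G)\setminus\{x\}$, a set $A\subseteq E(G)$ is an $(s,x,S)$-edge-separator if every $s$-path of $G$ from $x$ to a vertex of $S$ contains an edge of $A$; $\mathbf{supp}_{G,s}(x,S)$ is the minimum size of such a separator (it is $0$ if $S=\emptyset$). For a layout (linear ordering) $L=\langle v_1,\dots,v_r\rangle$ of $V(G)$, the $s$-edge-support of $v_i$ is $\mathbf{supp}_{G,s}(v_i,\{v_1,\dots,v_{i-1}\})$; the $s$-edge-degeneracy of $L$ is the maximum $s$-edge-support of its vertices, and $\delta^{s}_{\rm e}(G)$ is the minimum of this over all layouts of $V(G)$. A $(k,s)$-edge-hide-out is a set $R\subseteq V(G)$ such that $\mathbf{supp}_{G,s}(x,R\setminus\{x\})\geq k$ for every $x\in R$. Search game: a cop strategy is a function $f:V(G)\to 2^{E(G)}$, with cost $\max_{v}|f(v)|$.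 A robber strategy is a pair $R=(v_{\rm start},g)$ with $v_{\rm start}\in V(G)$ and $g:2^{E(G)}\times V(G)\to V(G)$ such that for all $F,v$ there is an $s$-path from $v$ to $g(F,v)$ in $G\setminus F$ (so $g(F,v)=v$ is always allowed). The game scenario of $(f,R)$ is the sequence $v_0,F_1,v_1,F_2,v_2,\dots$ with $v_0=v_{\rm start}$, $F_i=f(v_{i-1})$, $v_i=g(F_i,v_{i-1})$; $(f,R)$ is cop-winning if $v_i=v_{i-1}$ for some $i\geq1$. $\mathbf{cc}_s(G)$ is the minimum $k$ such that some cop strategy of cost at most $k$ is cop-winning against every robber strategy. *)

theory Defs
  imports Main "HOL-Library.Extended_Nat"
begin

text \<open>A finite loopless multigraph: vertex set V, a finite set E of edge
 identifiers (so parallel edges are allowed), and an endpoint map ends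
 assigning to each edge a 2-element set of vertices.\<close>

definition multigraph :: "'v set \<Rightarrow> 'e set \<Rightarrow> ('e \<Rightarrow> 'v set) \<Rightarrow> bool" where
  "multigraph V E ends \<longleftrightarrow> finite V \<and> finite E \<and>
     (\<forall>e\<in>E. ends e \<subseteq> V \<and> card (ends e) = 2)"

text \<open>A path given by its vertex sequence xs and edge sequence es
 (edges taken from the edge set E, so E - F gives the graph G minus F).\<close>

definition is_path :: "'v set \<Rightarrow> 'e set \<Rightarrow> ('e \<Rightarrow> 'v set) \<Rightarrow> 'v list \<Rightarrow> 'e list \<Rightarrow> bool" where
  "is_path V E ends xs es \<longleftrightarrow> xs \<noteq> [] \<and> distinct xs \<and> set xs \<subseteq> V \<and>
     length xs = Suc (length es) \<and> set es \<subseteq> E \<and>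
     (\<forall>i<length es. ends (es ! i) = {xs ! i, xs ! Suc i})"

definition s_path_edges :: "'v set \<Rightarrow> 'e set \<Rightarrow> ('e \<Rightarrow> 'v set) \<Rightarrow> enat \<Rightarrow> 'v \<Rightarrow> 'v \<Rightarrow> 'e list \<Rightarrow> bool" where
  "s_path_edges V E ends s x y es \<longleftrightarrow>
     (\<exists>xs. is_path V E ends xs es \<and> hd xs = x \<and> last xs = y \<and> enat (length es) \<le> s)"

definition has_s_path :: "'v set \<Rightarrow> 'e set \<Rightarrow> ('e \<Rightarrow> 'v set) \<Rightarrow> enat \<Rightarrow> 'v \<Rightarrow> 'v \<Rightarrow> bool" where
  "has_s_path V E ends s x y \<longleftrightarrow> (\<exists>es. s_path_edges V E ends s x y es)"

definition edge_separator :: "'v set \<Rightarrow> 'e set \<Rightarrow> ('e \<Rightarrow> 'v set) \<Rightarrow> enat \<Rightarrow> 'v \<Rightarrow> 'v set \<Rightarrow> 'e set \<Rightarrow> bool" where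
  "edge_separator V E ends s x S A \<longleftrightarrow> A \<subseteq> E \<and>
     (\<forall>y\<in>S. \<forall>es. s_path_edges V E ends s x y es \<longrightarrow> set es \<inter> A \<noteq> {})"

definition supp :: "'v set \<Rightarrow> 'e set \<Rightarrow> ('e \<Rightarrow> 'v set) \<Rightarrow> enat \<Rightarrow> 'v \<Rightarrow> 'v set \<Rightarrow> nat" where
  "supp V E ends s x S = (LEAST n. \<exists>A. edge_separator V E ends s x S A \<and> card A = n)"

definition is_layout :: "'v set \<Rightarrow> 'v list \<Rightarrow> bool" where
  "is_layout V L \<longleftrightarrow> distinct L \<and> set L = V"

definition layout_support :: "'v set \<Rightarrow> 'e set \<Rightarrow> ('e \<Rightarrow> 'v set) \<Rightarrow> enat \<Rightarrow> 'v list \<Rightarrow> nat \<Rightarrow> nat" where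
  "layout_support V E ends s L i = supp V E ends s (L ! i) (set (take i L))"

definition layout_degeneracy :: "'v set \<Rightarrow> 'e set \<Rightarrow> ('e \<Rightarrow> 'v set) \<Rightarrow> enat \<Rightarrow> 'v list \<Rightarrow> nat" where
  "layout_degeneracy V E ends s L = Max (insert 0 {layout_support V E ends s L i | i. i < length L})"

definition edge_degeneracy :: "'v set \<Rightarrow> 'e set \<Rightarrow> ('e \<Rightarrow> 'v set) \<Rightarrow> enat \<Rightarrow> nat" where
  "edge_degeneracy V E ends s = Min {layout_degeneracy V E ends s L | L. is_layout V L}"

definition edge_hideout :: "'v set \<Rightarrow> 'e set \<Rightarrow> ('e \<Rightarrow> 'v set) \<Rightarrow> nat \<Rightarrow> enat \<Rightarrow> 'v set \<Rightarrow> bool" where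
  "edge_hideout V E ends k s R \<longleftrightarrow> R \<subseteq> V \<and> (\<forall>x\<in>R. supp V E ends s x (R - {x}) \<ge> k)"

definition cop_strategy :: "'v set \<Rightarrow> 'e set \<Rightarrow> ('v \<Rightarrow> 'e set) \<Rightarrow> bool" where
  "cop_strategy V E f \<longleftrightarrow> (\<forall>v\<in>V. f v \<subseteq> E)"

definition cop_cost :: "'v set \<Rightarrow> ('v \<Rightarrow> 'e set) \<Rightarrow> nat" where
  "cop_cost V f = Max (insert 0 ((\<lambda>v. card (f v)) ` V))"

definition robber_strategy :: "'v set \<Rightarrow> 'e set \<Rightarrow> ('e \<Rightarrow> 'v set) \<Rightarrow> enat \<Rightarrow> 'v \<Rightarrow> ('e set \<Rightarrow> 'v \<Rightarrow> 'v) \<Rightarrow> bool" where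
  "robber_strategy V E ends s v0 g \<longleftrightarrow> v0 \<in> V \<and>
     (\<forall>F. F \<subseteq> E \<longrightarrow> (\<forall>v\<in>V. has_s_path V (E - F) ends s v (g F v)))"

text \<open>Robber positions v_0, v_1, ... of the game scenario (F_i = f v_(i-1)).\<close>
fun robber_pos :: "('v \<Rightarrow> 'e set) \<Rightarrow> 'v \<Rightarrow> ('e set \<Rightarrow> 'v \<Rightarrow> 'v) \<Rightarrow> nat \<Rightarrow> 'v" where
  "robber_pos f v0 g 0 = v0"
| "robber_pos f v0 g (Suc i) = g (f (robber_pos f v0 g i)) (robber_pos f v0 g i)"

definition cop_winning :: "('v \<Rightarrow> 'e set) \<Rightarrow> 'v \<Rightarrow> ('e set \<Rightarrow> 'v \<Rightarrow> 'v) \<Rightarrow> bool" where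
  "cop_winning f v0 g \<longleftrightarrow> (\<exists>i. robber_pos f v0 g (Suc i) = robber_pos f v0 g i)"

definition winning_cop_strategy :: "'v set \<Rightarrow> 'e set \<Rightarrow> ('e \<Rightarrow> 'v set) \<Rightarrow> enat \<Rightarrow> ('v \<Rightarrow> 'e set) \<Rightarrow> bool" where
  "winning_cop_strategy V E ends s f \<longleftrightarrow> cop_strategy V E f \<and>
     (\<forall>v0 g. robber_strategy V E ends s v0 g \<longrightarrow> cop_winning f v0 g)"

definition cop_number :: "'v set \<Rightarrow> 'e set \<Rightarrow> ('e \<Rightarrow> 'v set) \<Rightarrow> enat \<Rightarrow> nat" where
  "cop_number V E ends s = (LEAST k. \<exists>f. winning_cop_strategy V E ends s f \<and> cop_cost V f \<le> k)"

end

theory Submission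
  imports Defs
begin

lemma path_triv: "x \<in> V \<Longrightarrow> s_path_edges V E ends s x x []"
  unfolding s_path_edges_def is_path_def
  by (intro exI[of _ "[x]"]) (auto simp: zero_enat_def[symmetric])

lemma has_path_triv: "x \<in> V \<Longrightarrow> has_s_path V E ends s x x"
  unfolding has_s_path_def by (rule exI[of _ "[]"], erule path_triv)

lemma path_ne: "s_path_edges V E ends s x y es \<Longrightarrow> x \<noteq> y \<Longrightarrow> es \<noteq> []"
  unfolding s_path_edges_def is_path_def
  by (auto simp: length_Suc_conv)

lemma path_edges_sub: "s_path_edges V E ends s x y es \<Longrightarrow> set es \<subseteq> E"
  unfolding s_path_edges_def is_path_def by auto

lemma path_endV: "s_path_edges V E ends s x y es \<Longrightarrow> y \<in> V"
  unfolding s_path_edges_def is_path_def by auto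

lemma has_path_endV: "has_s_path V E ends s x y \<Longrightarrow> y \<in> V"
  unfolding has_s_path_def using path_endV by metis

lemma path_minus: "s_path_edges V (E - F) ends s x y es \<longleftrightarrow>
   s_path_edges V E ends s x y es \<and> set es \<inter> F = {}"
  unfolding s_path_edges_def is_path_def by auto

lemma E_sep: "x \<notin> S \<Longrightarrow> edge_separator V E ends s x S E"
  unfolding edge_separator_def
proof (intro conjI ballI allI impI)
  fix y es assume "x \<notin> S" "y \<in> S" "s_path_edges V E ends s x y es"
  then have "es \<noteq> []" "set es \<subseteq> E" using path_ne path_edges_sub by metis+
  then show "set es \<inter> E \<noteq> {}" by (cases es) auto
qed simp

lemma supp_ex: "x \<notin> S \<Longrightarrow> \<exists>A. edge_separator V E ends s x S A \<and> card A = supp V E ends s x S"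
proof -
  assume x: "x \<notin> S"
  have ex: "\<exists>n A. edge_separator V E ends s x S A \<and> card A = n"
    by (rule exI[of _ "card E"], rule exI[of _ E], rule conjI[OF E_sep[OF x] refl])
  show ?thesis unfolding supp_def by (rule LeastI_ex[OF ex])
qed

lemma supp_le: "edge_separator V E ends s x S A \<Longrightarrow> supp V E ends s x S \<le> card A"
  unfolding supp_def by (rule Least_le) blast

lemma not_sep_path:
  assumes "F \<subseteq> E" "card F < supp V E ends s x S"
  shows "\<exists>y\<in>S. has_s_path V (E - F) ends s x y"
proof -
  have "\<not> edge_separator V E ends s x S F" using supp_le assms(2) by fastforce
  then obtain y es where "y \<in> S" "s_path_edges V E ends s x y es" "set es \<inter> F = {}"
    using assms(1) unfolding edge_separator_def by blast
  then have "y \<in> S" "s_path_edges V (E - F) ends s x y es" by (simp_all add: path_minus)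
  then show ?thesis unfolding has_s_path_def by blast
qed

lemma in_take_iff: "distinct L \<Longrightarrow> j < length L \<Longrightarrow> (L ! j \<in> set (take i L)) \<longleftrightarrow> j < i"
proof
  assume d: "distinct L" "j < length L" and "L ! j \<in> set (take i L)"
  then obtain m where m: "m < length (take i L)" "take i L ! m = L ! j"
    by (auto simp: in_set_conv_nth)
  then have "L ! m = L ! j" "m < length L" "m < i" by auto
  then have "m = j" using d nth_eq_iff_index_eq by blast
  then show "j < i" using \<open>m < i\<close> by simp
next
  assume "distinct L" "j < length L" "j < i"
  then show "L ! j \<in> set (take i L)"
    by (metis in_set_conv_nth length_take min_less_iff_conj nth_take)
qed

theorem mainTheorem1:
  fixes V :: "'v set" and E :: "'e set" and ends :: "'e \<Rightarrow> 'v set"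
    and s :: enat and k :: nat
  assumes "multigraph V E ends" and "s \<ge> 1"
  shows "(cop_number V E ends s \<le> k \<longleftrightarrow>
            \<not> (\<exists>R. R \<noteq> {} \<and> edge_hideout V E ends (k + 1) s R))
       \<and> (\<not> (\<exists>R. R \<noteq> {} \<and> edge_hideout V E ends (k + 1) s R) \<longleftrightarrow>
            edge_degeneracy V E ends s \<le> k)"
proof -
  have finV: "finite V" and finE: "finite E" using assms(1) unfolding multigraph_def by auto
  define Ls where "Ls = {layout_degeneracy V E ends s L | L. is_layout V L}"
  have finLs: "finite Ls"
  proof -
    have "{L. is_layout V L} \<subseteq> {xs. set xs \<subseteq> V \<and> length xs = card V}"
      unfolding is_layout_def using distinct_card by fastforce
    then have "finite {L. is_layout V L}" using finite_lists_length_eq[OF finV] finite_subset by blast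
    moreover have "Ls = (\<lambda>L. layout_degeneracy V E ends s L) ` {L. is_layout V L}"
      unfolding Ls_def by auto
    ultimately show ?thesis by simp
  qed
  have ldeg: "layout_degeneracy V E ends s L \<le> k \<longleftrightarrow> (\<forall>i<length L. layout_support V E ends s L i \<le> k)" for L
  proof -
    have "finite (insert 0 {layout_support V E ends s L i | i. i < length L})" by simp
    then show ?thesis unfolding layout_degeneracy_def by (subst Max_le_iff) auto
  qed
  have costle: "v \<in> V \<Longrightarrow> card (f v) \<le> cop_cost V f" for f and v :: 'v
    unfolding cop_cost_def using finV by (intro Max_ge) auto
  have A: "\<not> (\<exists>R. R \<noteq> {} \<and> edge_hideout V E ends (k + 1) s R)" if cn: "cop_number V E ends s \<le> k"
  proof
    assume "\<exists>R. R \<noteq> {} \<and> edge_hideout V E ends (k + 1) s R"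
    then obtain R where R: "R \<noteq> {}" "R \<subseteq> V" "\<And>x. x \<in> R \<Longrightarrow> supp V E ends s x (R - {x}) \<ge> k + 1"
      unfolding edge_hideout_def by blast
    have "winning_cop_strategy V E ends s (\<lambda>_. E)"
      unfolding winning_cop_strategy_def cop_strategy_def
    proof (intro conjI allI impI ballI)
      fix v0 g assume r: "robber_strategy V E ends s v0 g"
      then have "has_s_path V (E - E) ends s v0 (g E v0)" unfolding robber_strategy_def by auto
      then obtain es where "s_path_edges V {} ends s v0 (g E v0) es" unfolding has_s_path_def by auto
      then have "g E v0 = v0" using path_ne path_edges_sub by fastforce
      then show "cop_winning (\<lambda>_. E) v0 g" unfolding cop_winning_def
        by (intro exI[of _ 0]) simp
    qed simp
    then have ex: "\<exists>n. \<exists>f. winning_cop_strategy V E ends s f \<and> cop_cost V f \<le> n" by blast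
    obtain f where f0: "winning_cop_strategy V E ends s f" "cop_cost V f \<le> cop_number V E ends s"
      using LeastI_ex[OF ex] unfolding cop_number_def by blast
    then have f: "winning_cop_strategy V E ends s f" "cop_cost V f \<le> k" using cn by auto
    obtain v0 where v0: "v0 \<in> R" using R(1) by blast
    define g where "g F v = (if v \<in> R \<and> F \<subseteq> E \<and> card F \<le> k
        then (SOME y. y \<in> R - {v} \<and> has_s_path V (E - F) ends s v y) else v)" for F v
    have gR: "v \<in> R \<Longrightarrow> F \<subseteq> E \<Longrightarrow> card F \<le> k \<Longrightarrow> g F v \<in> R - {v} \<and> has_s_path V (E - F) ends s v (g F v)" for v F
    proof -
      assume a: "v \<in> R" "F \<subseteq> E" "card F \<le> k"
      have "card F < k + 1" using a(3) by simp
      then have "card F < supp V E ends s v (R - {v})" using R(3)[OF a(1)] by (rule less_le_trans)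
      then have "\<exists>y\<in>R - {v}. has_s_path V (E - F) ends s v y" by (rule not_sep_path[OF a(2)])
      then have "\<exists>y. y \<in> R - {v} \<and> has_s_path V (E - F) ends s v y" by (simp only: Bex_def)
      from someI_ex[OF this] show ?thesis using a unfolding g_def by simp
    qed
    have rs: "robber_strategy V E ends s v0 g"
      unfolding robber_strategy_def
    proof (intro conjI allI impI ballI)
      show "v0 \<in> V" using v0 R(2) by blast
      fix F v assume "F \<subseteq> E" "v \<in> V"
      then show "has_s_path V (E - F) ends s v (g F v)"
        using gR[of v F] has_path_triv[of v V "E - F" ends s] unfolding g_def by (cases "v \<in> R \<and> card F \<le> k") auto
    qed
    have pR: "robber_pos f v0 g n \<in> R" for n
    proof (induction n)
      case 0 then show ?case using v0 by simp
    next
      case (Suc n)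
      let ?p = "robber_pos f v0 g n"
      have "?p \<in> V" using Suc R(2) by blast
      then have "f ?p \<subseteq> E" "card (f ?p) \<le> k" using f costle[of ?p f]
        unfolding winning_cop_strategy_def cop_strategy_def by auto
      then show ?case using gR[OF Suc] by simp
    qed
    have "cop_winning f v0 g" using f(1) rs unfolding winning_cop_strategy_def by blast
    then obtain i where i: "robber_pos f v0 g (Suc i) = robber_pos f v0 g i" unfolding cop_winning_def by blast
    let ?p = "robber_pos f v0 g i"
    have "?p \<in> V" using pR R(2) by blast
    then have "f ?p \<subseteq> E" "card (f ?p) \<le> k" using f costle[of ?p f]
      unfolding winning_cop_strategy_def cop_strategy_def by auto
    then have "robber_pos f v0 g (Suc i) \<noteq> ?p" using gR[OF pR[of i]] by simp
    then show False using i by simp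
  qed
  have B: "edge_degeneracy V E ends s \<le> k" if nh: "\<not> (\<exists>R. R \<noteq> {} \<and> edge_hideout V E ends (k + 1) s R)"
  proof -
    have "\<forall>R. card R = n \<longrightarrow> R \<subseteq> V \<longrightarrow> (\<exists>L. distinct L \<and> set L = R \<and>
        (\<forall>i<length L. supp V E ends s (L ! i) (set (take i L)) \<le> k))" for n
    proof (induction n)
      case 0
      show ?case
      proof (intro allI impI)
        fix R assume "card R = 0" and RV: "R \<subseteq> V"
        then have "R = {}" using finite_subset[OF RV finV] by simp
        then show "\<exists>L. distinct L \<and> set L = R \<and>
        (\<forall>i<length L. supp V E ends s (L ! i) (set (take i L)) \<le> k)" by (intro exI[of _ "[]"]) simp
      qed
    next
      case (Suc n)
      show ?case
      proof (intro allI impI)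
        fix R assume c: "card R = Suc n" and RV: "R \<subseteq> V"
        then have "R \<noteq> {}" by auto
        then have "\<not> edge_hideout V E ends (k + 1) s R" using nh by blast
        then obtain x where x: "x \<in> R" "supp V E ends s x (R - {x}) \<le> k"
          using RV unfolding edge_hideout_def by force
        have "card (R - {x}) = n" using c x(1) by simp
        then obtain L' where L': "distinct L'" "set L' = R - {x}"
          "\<forall>i<length L'. supp V E ends s (L' ! i) (set (take i L')) \<le> k"
          using Suc.IH RV by blast
        show "\<exists>L. distinct L \<and> set L = R \<and>
          (\<forall>i<length L. supp V E ends s (L ! i) (set (take i L)) \<le> k)"
        proof (intro exI[of _ "L' @ [x]"] conjI allI impI)
          show "distinct (L' @ [x])" using L' by simp
          show "set (L' @ [x]) = R" using L' x by auto
          fix i assume i: "i < length (L' @ [x])"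
          show "supp V E ends s ((L' @ [x]) ! i) (set (take i (L' @ [x]))) \<le> k"
          proof (cases "i < length L'")
            case True
            then show ?thesis using L'(3) by (simp add: nth_append)
          next
            case False
            then have "i = length L'" using i by simp
            then show ?thesis using L'(2) x by simp
          qed
        qed
      qed
    qed
    then obtain L where L: "distinct L" "set L = V"
        "\<forall>i<length L. supp V E ends s (L ! i) (set (take i L)) \<le> k" by blast
    then have "layout_degeneracy V E ends s L \<in> Ls" unfolding Ls_def is_layout_def by blast
    moreover have "layout_degeneracy V E ends s L \<le> k" unfolding ldeg layout_support_def using L(3) by simp
    ultimately show ?thesis unfolding edge_degeneracy_def Ls_def[symmetric]
      using Min_le[OF finLs] le_trans by blast
  qed
  have C: "cop_number V E ends s \<le> k" if d: "edge_degeneracy V E ends s \<le> k"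
  proof -
    obtain L0 where "set L0 = V" "distinct L0" using finite_distinct_list[OF finV] by blast
    then have "Ls \<noteq> {}" unfolding Ls_def is_layout_def by blast
    then have "Min Ls \<in> Ls" using Min_in finLs by blast
    then obtain L where L: "is_layout V L" "layout_degeneracy V E ends s L \<le> k"
      using d unfolding Ls_def edge_degeneracy_def by auto
    have dL: "distinct L" and sL: "set L = V" using L(1) unfolding is_layout_def by auto
    have supk: "i < length L \<Longrightarrow> supp V E ends s (L ! i) (set (take i L)) \<le> k" for i
      using L(2) unfolding ldeg layout_support_def by simp
    define idx where "idx v = (SOME i. i < length L \<and> L ! i = v)" for v
    have idx: "v \<in> V \<Longrightarrow> idx v < length L \<and> L ! idx v = v" for v
      unfolding idx_def using sL by (metis (mono_tags, lifting) in_set_conv_nth someI_ex)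
    define S where "S v = set (take (idx v) L)" for v
    have notin: "v \<in> V \<Longrightarrow> v \<notin> S v" for v
      unfolding S_def using in_take_iff[OF dL, of "idx v" "idx v"] idx[of v] by simp
    define f where "f v = (SOME A. edge_separator V E ends s v (S v) A \<and> card A = supp V E ends s v (S v))" for v
    have fsep: "v \<in> V \<Longrightarrow> edge_separator V E ends s v (S v) (f v) \<and> card (f v) = supp V E ends s v (S v)" for v
      unfolding f_def using supp_ex[OF notin] by (rule someI_ex)
    have fk: "v \<in> V \<Longrightarrow> card (f v) \<le> k" for v
      using fsep[of v] supk[of "idx v"] idx[of v] unfolding S_def by simp
    have cs: "cop_strategy V E f" unfolding cop_strategy_def
    proof
      fix v assume "v \<in> V"
      from fsep[OF this] show "f v \<subseteq> E" by (simp add: edge_separator_def)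
    qed
    have cost: "cop_cost V f \<le> k"
      unfolding cop_cost_def using finV fk by (subst Max_le_iff) auto
    have win: "winning_cop_strategy V E ends s f"
      unfolding winning_cop_strategy_def
    proof (intro conjI allI impI cs)
      fix v0 g assume r: "robber_strategy V E ends s v0 g"
      let ?p = "robber_pos f v0 g"
      have step: "?p n \<in> V \<Longrightarrow> has_s_path V (E - f (?p n)) ends s (?p n) (?p (Suc n))" for n
        using r cs unfolding robber_strategy_def cop_strategy_def by simp
      have pV: "?p n \<in> V" for n
      proof (induction n)
        case 0 then show ?case using r unfolding robber_strategy_def by simp
      next
        case (Suc n) then show ?case by (rule has_path_endV[OF step])
      qed
      have mono: "idx (?p n) \<le> idx (?p (Suc n))" for n
      proof (rule ccontr)
        assume "\<not> ?thesis"
        then have lt: "idx (?p (Suc n)) < idx (?p n)" by simp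
        have "?p (Suc n) \<in> S (?p n)"
          using in_take_iff[OF dL, of "idx (?p (Suc n))" "idx (?p n)"] idx[OF pV[of "Suc n"]] lt
          unfolding S_def by simp
        moreover obtain es where "s_path_edges V (E - f (?p n)) ends s (?p n) (?p (Suc n)) es"
          using step[OF pV] unfolding has_s_path_def by blast
        then have "s_path_edges V E ends s (?p n) (?p (Suc n)) es" "set es \<inter> f (?p n) = {}"
          by (simp_all add: path_minus)
        ultimately show False using fsep[OF pV[of n]] unfolding edge_separator_def by blast
      qed
      show "cop_winning f v0 g"
      proof (rule ccontr)
        assume nw: "\<not> cop_winning f v0 g"
        have strict: "idx (?p n) < idx (?p (Suc n))" for n
        proof -
          have "?p (Suc n) \<noteq> ?p n" using nw unfolding cop_winning_def by blast
          then have "idx (?p (Suc n)) \<noteq> idx (?p n)" using idx[OF pV[of n]] idx[OF pV[of "Suc n"]] by metis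
          then show ?thesis using mono[of n] by simp
        qed
        have "n \<le> idx (?p n)" for n
        proof (induction n)
          case (Suc n) then show ?case using strict[of n] by simp
        qed simp
        then show False using idx[OF pV[of "length L"]] by (metis not_le)
      qed
    qed
    show ?thesis unfolding cop_number_def
      by (rule Least_le) (use win cost in blast)
  qed
  show ?thesis using A B C by blast
qed

end
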